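(* Let $\mathfrak u(n)$ be the real vector space of skew-Hermitian $n\times n$ complex matrices with the Frobenius inner product $\langle a,b\rangle=\operatorname{Re}\operatorname{tr}(a^\dagger b)$ and norm $\|\cdot\|$, and let $g$ be a vector field on $\mathfrak u(n)$. For $z\in\mathfrak u(n)$ with distinct nonzero eigenvalues, write uniquely $g(z)=[L,z]+Pz$ with $L$ in the range of $K\mapsto[K,z]$ and $P$ commuting with $z$ (then $L$ is skew-Hermitian and $P$ Hermitian), write $L(z),P(z)$ for these, and set $M(z):=-L(z)+\tfrac12P(z)$ (so $M(z)^\dagger=L(z)+\tfrac12P(z)$ and $g(z)=M(z)^\dagger z+zM(z)$). Let $b_1,\dots,b_s$, $h>0$, and $z_0,z_1,Z_1,\dots,Z_s\in\mathfrak u(n)$, each $Z_i$ having distinct nonzero eigenvalues, satisfy \[ Z_i = z_0 + h\sum_{j=1}^{i-1}b_jg(Z_j) + \frac h2 b_ig(Z_i) - \frac{h^2}{4}b_i^2M(Z_i)^\dagger Z_iM(Z_i),\qquad z_1 = z_0 + h\sum_{i=1}^s b_ig(Z_i). \] Then \[ \tfrac12\|z_1\|^2 = \tfrac12\|z_0\|^2 - h\sum_{i=1}^s b_i\operatorname{tr}\bigl(Z_iP(Z_i)Z_i\bigr) - \frac{h^3}{4}\sum_{i=1}^s b_i^3\operatorname{tr}\bigl(M(Z_i)^\dagger Z_iP(Z_i)Z_iM(Z_i)\bigr). \] In particular, when $g(z)=[M(z)^\dagger,z]$, so that $P=0$, the Frobenius norm is conserved: $\|z_1\|=\|z_0\|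$.
   Context: $A^\dagger$ denotes the conjugate transpose; $[A,B]=AB-BA$. For $z$ with distinct nonzero eigenvalues, every matrix $K$ decomposes uniquely as $K=[L,z]+Pz$ with $L$ in the range of $X\mapsto[X,z]$ and $P$ in its kernel (matrices commuting with $z$); in the eigenbasis of $z$ this is the splitting of $K$ into off-diagonal and diagonal parts. *)

theory Defs
  imports "HOL-Analysis.Analysis"
begin

type_synonym 'n cmat = "complex^'n^'n"

definition cadj :: "'n::finite cmat \<Rightarrow> 'n cmat" where
  "cadj A = (\<chi> i j. cnj (A $ j $ i))"

definition comm :: "'n::finite cmat \<Rightarrow> 'n cmat \<Rightarrow> 'n cmat" where
  "comm A B = A ** B - B ** A"

definition skew_hermitian :: "'n::finite cmat \<Rightarrow> bool" where
  "skew_hermitian A \<longleftrightarrow> cadj A = - A"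

definition frob_inner :: "'n::finite cmat \<Rightarrow> 'n cmat \<Rightarrow> real" where
  "frob_inner A B = Re (trace (cadj A ** B))"

definition frob_norm :: "'n::finite cmat \<Rightarrow> real" where
  "frob_norm A = sqrt (frob_inner A A)"

definition is_eigenvalue :: "'n::finite cmat \<Rightarrow> complex \<Rightarrow> bool" where
  "is_eigenvalue A c \<longleftrightarrow> (\<exists>v. v \<noteq> 0 \<and> A *v v = c *s v)"

definition distinct_nonzero_eigs :: "'n::finite cmat \<Rightarrow> bool" where
  "distinct_nonzero_eigs A \<longleftrightarrow>
     card {c. is_eigenvalue A c} = CARD('n) \<and> \<not> is_eigenvalue A 0"

definition decomp :: "'n::finite cmat \<Rightarrow> 'n cmat \<Rightarrow> 'n cmat \<times> 'n cmat" where
  "decomp K z = (THE (L, P). L \<in> range (\<lambda>X. comm X z) \<and> comm P z = 0 \<and>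
                               K = comm L z + P ** z)"

definition Lpart :: "('n::finite cmat \<Rightarrow> 'n cmat) \<Rightarrow> 'n cmat \<Rightarrow> 'n cmat" where
  "Lpart g z = fst (decomp (g z) z)"

definition Ppart :: "('n::finite cmat \<Rightarrow> 'n cmat) \<Rightarrow> 'n cmat \<Rightarrow> 'n cmat" where
  "Ppart g z = snd (decomp (g z) z)"

definition Mpart :: "('n::finite cmat \<Rightarrow> 'n cmat) \<Rightarrow> 'n cmat \<Rightarrow> 'n cmat" where
  "Mpart g z = - Lpart g z + (1/2::real) *\<^sub>R Ppart g z"

end

theory Submission
  imports Defs
begin


lemma cadj_mult: "cadj (A ** B) = cadj B ** (cadj A :: 'n::finite cmat)"
  by (simp add: cadj_def matrix_matrix_mult_def vec_eq_iff mult.commute)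
lemma cadj_add: "cadj (A + B) = cadj A + (cadj B :: 'n::finite cmat)"
  by (simp add: cadj_def vec_eq_iff)
lemma cadj_diff: "cadj (A - B) = cadj A - (cadj B :: 'n::finite cmat)"
  by (simp add: cadj_def vec_eq_iff)
lemma cadj_minus: "cadj (- A) = - (cadj A :: 'n::finite cmat)"
  by (simp add: cadj_def vec_eq_iff)
lemma cadj_scaleR: "cadj (r *\<^sub>R A) = r *\<^sub>R (cadj A :: 'n::finite cmat)"
  by (simp add: cadj_def vec_eq_iff)
lemma cadj_cadj: "cadj (cadj A) = (A :: 'n::finite cmat)"
  by (simp add: cadj_def vec_eq_iff)
lemma cadj_zero: "cadj 0 = (0 :: 'n::finite cmat)"
  by (simp add: cadj_def vec_eq_iff)
lemma trace_cadj: "trace (cadj A) = cnj (trace (A :: 'n::finite cmat))"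
  by (simp add: cadj_def trace_def)
lemma frob_inner_inner: "frob_inner A B = inner A (B :: 'n::finite cmat)"
  unfolding frob_inner_def trace_def cadj_def matrix_matrix_mult_def inner_vec_def
  apply (simp add: inner_complex_def Re_sum)
  apply (subst sum.swap) apply simp done
lemma frob_norm_norm: "frob_norm A = norm (A :: 'n::finite cmat)"
  by (simp add: frob_norm_def frob_inner_inner norm_eq_sqrt_inner)



lemma mm_radd: "(A + B) ** C = A ** C + B ** (C :: 'n::finite cmat)"
  by (simp add: matrix_matrix_mult_def vec_eq_iff algebra_simps sum.distrib)
lemma mm_ladd: "C ** (A + B) = C ** A + C ** (B :: 'n::finite cmat)"
  by (rule matrix_add_ldistrib)
lemma mm_rdiff: "(A - B) ** C = A ** C - B ** (C :: 'n::finite cmat)"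
  by (simp add: matrix_matrix_mult_def vec_eq_iff algebra_simps sum_subtractf)
lemma mm_ldiff: "C ** (A - B) = C ** A - C ** (B :: 'n::finite cmat)"
  by (simp add: matrix_matrix_mult_def vec_eq_iff algebra_simps sum_subtractf)
lemma mm_rneg: "(- A) ** C = - (A ** (C :: 'n::finite cmat))"
  by (simp add: matrix_matrix_mult_def vec_eq_iff sum_negf)
lemma mm_lneg: "C ** (- A) = - (C ** (A :: 'n::finite cmat))"
  by (simp add: matrix_matrix_mult_def vec_eq_iff sum_negf)
lemma mm_rscale: "(r *\<^sub>R A) ** C = r *\<^sub>R (A ** (C :: 'n::finite cmat))"
  by (simp add: scalar_matrix_assoc)
lemma mm_lscale: "C ** (r *\<^sub>R A) = r *\<^sub>R (C ** (A :: 'n::finite cmat))"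
  by (simp add: matrix_scalar_ac scalar_matrix_assoc)

lemmas mm_simps = mm_radd mm_ladd mm_rdiff mm_ldiff mm_rneg mm_lneg mm_rscale mm_lscale
  cadj_mult cadj_add cadj_diff cadj_minus cadj_scaleR cadj_cadj cadj_zero

lemma trace_neg: "trace (- A) = - trace (A :: 'n::finite cmat)"
  by (simp add: trace_def sum_negf)
lemma trace_scale: "trace (r *\<^sub>R A) = of_real r * trace (A :: 'n::finite cmat)"
proof -
  have "(r *\<^sub>R A) $ i $ i = of_real r * A $ i $ i" for i by (simp only: vector_scaleR_component) (simp add: scaleR_conv_of_real)
  then show ?thesis by (simp add: trace_def sum_distrib_left)
qed

lemma trace_cyc3: "trace (A ** B ** C) = trace (C ** A ** (B :: 'n::finite cmat))"
  by (metis trace_mul_sym matrix_mul_assoc)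

lemma comm_linear: "linear (\<lambda>X. comm X (Z :: 'n::finite cmat))"
  by (rule linearI) (simp_all add: comm_def mm_simps algebra_simps)

lemma skew_adj:
  assumes "skew_hermitian Z"
  shows "inner A (comm B Z) = - inner (comm A Z) (B :: 'n::finite cmat)"
proof -
  have Z: "cadj Z = - Z" using assms by (simp add: skew_hermitian_def)
  have "trace (cadj A ** (B ** Z - Z ** B)) = trace (cadj A ** B ** Z) - trace (cadj A ** Z ** B)"
    by (simp add: mm_simps trace_sub matrix_mul_assoc)
  moreover have "trace (cadj (A ** Z - Z ** A) ** B) = trace (cadj A ** Z ** B) - trace (Z ** cadj A ** B)"
    by (simp add: mm_simps Z trace_sub trace_neg trace_add matrix_mul_assoc)
  moreover have "trace (cadj A ** B ** Z) = trace (Z ** cadj A ** B)" by (rule trace_cyc3)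
  ultimately show ?thesis
    by (simp add: frob_inner_inner[symmetric] frob_inner_def comm_def)
qed

lemma range_ker:
  assumes "skew_hermitian Z" "comm Y Z = 0" "Y = comm X (Z :: 'n::finite cmat)"
  shows "Y = 0"
proof -
  have "inner Y Y = inner Y (comm X Z)" using assms by simp
  also have "\<dots> = - inner (comm Y Z) X" by (rule skew_adj[OF assms(1)])
  finally show ?thesis using assms(2) by simp
qed

lemma inv_Z:
  fixes Z :: "'n::finite cmat"
  assumes "\<not> is_eigenvalue Z 0"
  obtains Zi where "Zi ** Z = mat 1" "Z ** Zi = mat 1"
proof -
  have "\<forall>x. Z *v x = 0 \<longrightarrow> x = 0" using assms by (auto simp: is_eigenvalue_def)
  then obtain B where "B ** Z = mat 1" using matrix_left_invertible_ker by blast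
  then show ?thesis using that matrix_left_right_inverse by blast
qed



definition decP :: "'n::finite cmat \<Rightarrow> 'n cmat \<Rightarrow> 'n cmat \<times> 'n cmat \<Rightarrow> bool" where
  "decP K z p = (case p of (L, P) \<Rightarrow> L \<in> range (\<lambda>X. comm X z) \<and> comm P z = 0 \<and>
                               K = comm L z + P ** z)"

lemma decomp_exists:
  fixes Z K :: "'n::finite cmat"
  assumes sk: "skew_hermitian Z" and ne: "\<not> is_eigenvalue Z 0"
  shows "\<exists>p. decP K Z p"
proof -
  let ?ad = "\<lambda>X. comm X Z"
  let ?S = "range (\<lambda>X. ?ad (?ad X))"
  have lin: "linear (\<lambda>X. ?ad (?ad X))"
    using linear_compose[OF comm_linear comm_linear] by (simp add: o_def)
  have sub: "subspace ?S" by (rule linear_subspace_image[OF lin subspace_UNIV])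
  obtain y q where y: "y \<in> span ?S" and q: "\<And>w. w \<in> span ?S \<Longrightarrow> orthogonal q w"
    and K: "K = y + q"
    using orthogonal_subspace_decomp_exists[of ?S K] by metis
  from y sub have "y \<in> ?S" by (metis span_eq_iff)
  then obtain W where W: "y = ?ad (?ad W)" by blast
  have q0: "inner q (?ad (?ad X)) = 0" for X
    using q[of "?ad (?ad X)"] by (auto simp: orthogonal_def span_base)
  have "inner q (?ad (?ad X)) = inner (?ad (?ad q)) X" for X
    using skew_adj[OF sk, of q "?ad X"] skew_adj[OF sk, of "?ad q" X] by simp
  hence "inner (?ad (?ad q)) (?ad (?ad q)) = 0" using q0 by metis
  hence aa: "?ad (?ad q) = 0" by simp
  have "inner (?ad q) (?ad q) = - inner q (?ad (?ad q))"
    using skew_adj[OF sk, of q "?ad q"] by simp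
  hence cq: "?ad q = 0" using aa by simp
  hence qZ: "Z ** q = q ** Z" by (simp add: comm_def)
  obtain Zi where Zi: "Zi ** Z = mat 1" "Z ** Zi = mat 1" using inv_Z[OF ne] by blast
  define P where "P = q ** Zi"
  have PZ: "P ** Z = q" using Zi by (simp add: P_def matrix_mul_assoc[symmetric])
  have ZP: "Z ** P = q" 
    by (simp add: P_def matrix_mul_assoc qZ) (simp add: matrix_mul_assoc[symmetric] Zi)
  have "decP K Z (?ad W, P)"
    unfolding decP_def using K W PZ ZP by (auto simp: comm_def)
  thus ?thesis by blast
qed

lemma decomp_unique:
  fixes Z K :: "'n::finite cmat"
  assumes sk: "skew_hermitian Z" and ne: "\<not> is_eigenvalue Z 0"
    and d1: "decP K Z p" and d2: "decP K Z p'"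
  shows "p = p'"
proof -
  obtain L P where p: "p = (L, P)" by (cases p)
  obtain L' P' where p': "p' = (L', P')" by (cases p')
  obtain X where X: "L = comm X Z" and cP: "comm P Z = 0" and K: "K = comm L Z + P ** Z"
    using d1 by (auto simp: decP_def p)
  obtain X' where X': "L' = comm X' Z" and cP': "comm P' Z = 0" and K': "K = comm L' Z + P' ** Z"
    using d2 by (auto simp: decP_def p')
  define D where "D = L - L'"
  define E where "E = P - P'"
  have D: "D = comm (X - X') Z" by (simp add: D_def X X' comm_def mm_simps)
  have cE: "comm E Z = 0" using cP cP' by (simp add: E_def comm_def mm_simps)
  have eq: "comm D Z = - (E ** Z)"
    using K K' by (simp add: D_def E_def comm_def mm_simps algebra_simps)
  have "comm (comm D Z) Z = 0"
  proof -
    have "Z ** E = E ** Z" using cE by (simp add: comm_def)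
    hence e: "Z ** E ** Z = E ** Z ** Z" by simp
    have "comm (comm D Z) Z = comm (-(E ** Z)) Z" by (simp only: eq)
    also have "\<dots> = 0" by (simp add: comm_def mm_simps matrix_mul_assoc e)
    finally show ?thesis .
  qed
  hence c0: "comm D Z = 0" using range_ker[OF sk _ refl] by blast
  hence D0: "D = 0" using range_ker[OF sk _ D] by blast
  have "E ** Z = 0" using eq c0 by simp
  moreover obtain Zi where Zi: "Zi ** Z = mat 1" "Z ** Zi = mat 1" using inv_Z[OF ne] by blast
  ultimately have "E = 0"
    by (metis Zi(2) matrix_mul_assoc matrix_mul_rid times0_left)
  with D0 show ?thesis by (simp add: p p' D_def E_def)
qed

lemma decomp_props:
  fixes Z K :: "'n::finite cmat"
  assumes sk: "skew_hermitian Z" and ne: "\<not> is_eigenvalue Z 0" and skK: "skew_hermitian K"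
  shows "K = comm (fst (decomp K Z)) Z + snd (decomp K Z) ** Z"
    "comm (snd (decomp K Z)) Z = 0"
    "cadj (fst (decomp K Z)) = - fst (decomp K Z)"
    "cadj (snd (decomp K Z)) = snd (decomp K Z)"
proof -
  have ex1: "\<exists>!p. decP K Z p"
    using decomp_exists[OF sk ne] decomp_unique[OF sk ne] by blast
  have dd: "decP K Z (decomp K Z)"
    unfolding decomp_def using theI'[OF ex1] unfolding decP_def .
  obtain L P where LP: "decomp K Z = (L, P)" by (cases "decomp K Z")
  obtain X where X: "L = comm X Z" and cP: "comm P Z = 0" and K: "K = comm L Z + P ** Z"
    using dd by (auto simp: decP_def LP)
  have Z: "cadj Z = - Z" using sk by (simp add: skew_hermitian_def)
  have KK: "cadj K = - K" using skK by (simp add: skew_hermitian_def)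
  have PZ: "P ** Z = Z ** P" using cP by (simp add: comm_def)
  have "cadj (P ** Z) = cadj (Z ** P)" using PZ by simp
  hence PZ': "Z ** cadj P = cadj P ** Z" by (simp add: mm_simps Z)
  have d2: "decP K Z (- cadj L, cadj P)"
  proof -
    have "- cadj L = comm (- cadj X) Z" by (simp add: X comm_def mm_simps Z)
    moreover have "comm (cadj P) Z = 0" using PZ' by (simp add: comm_def)
    moreover have "K = comm (- cadj L) Z + cadj P ** Z"
    proof -
      have "K = - cadj K" using KK by simp
      also have "\<dots> = - cadj (comm L Z + P ** Z)" using K by simp
      also have "\<dots> = comm (- cadj L) Z + cadj P ** Z"
        by (simp add: comm_def mm_simps Z PZ')
      finally show ?thesis .
    qed
    ultimately show ?thesis by (auto simp: decP_def)
  qed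
  have "(L, P) = (- cadj L, cadj P)"
    using decomp_unique[OF sk ne _ d2] dd LP by simp
  hence "cadj L = - L" "cadj P = P" by (metis cadj_minus cadj_cadj minus_minus prod.inject)+
  thus "K = comm (fst (decomp K Z)) Z + snd (decomp K Z) ** Z"
    "comm (snd (decomp K Z)) Z = 0"
    "cadj (fst (decomp K Z)) = - fst (decomp K Z)"
    "cadj (snd (decomp K Z)) = snd (decomp K Z)" using LP K cP by auto
qed



lemma real_of_cnj: "cnj t = t \<Longrightarrow> complex_of_real (Re t) = t"
  by (simp add: complex_eq_iff)

lemma M_props:
  fixes g :: "'n::finite cmat \<Rightarrow> 'n cmat" and Z :: "'n cmat"
  assumes sk: "skew_hermitian Z" and ne: "\<not> is_eigenvalue Z 0" and skK: "skew_hermitian (g Z)"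
  shows "g Z = cadj (Mpart g Z) ** Z + Z ** Mpart g Z"
    "Mpart g Z + cadj (Mpart g Z) = Ppart g Z"
    "Ppart g Z ** Z = Z ** Ppart g Z"
proof -
  note d = decomp_props[OF sk ne skK]
  define L where "L = Lpart g Z"
  define P where "P = Ppart g Z"
  have M: "Mpart g Z = - L + (1/2::real) *\<^sub>R P" by (simp add: Mpart_def L_def P_def)
  have L: "cadj L = - L" and P: "cadj P = P" and PZ: "P ** Z = Z ** P"
    and G: "g Z = comm L Z + P ** Z"
    using d by (auto simp: L_def P_def Lpart_def Ppart_def comm_def)
  show "Ppart g Z ** Z = Z ** Ppart g Z" using PZ P_def by simp
  show "Mpart g Z + cadj (Mpart g Z) = Ppart g Z"
    by (simp add: M mm_simps L P P_def[symmetric] scaleR_2[symmetric] flip: scaleR_add_left)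
  have "cadj (Mpart g Z) ** Z + Z ** Mpart g Z = (L ** Z - Z ** L) + (1/2::real) *\<^sub>R (P ** Z + Z ** P)"
    by (simp add: M mm_simps L P algebra_simps)
  also have "\<dots> = g Z" using G PZ by (simp add: comm_def flip: scaleR_2)
  finally show "g Z = cadj (Mpart g Z) ** Z + Z ** Mpart g Z" ..
qed



lemma tr_c:
  fixes Z G M :: "'n::finite cmat"
  assumes Z: "cadj Z = - Z" and GG: "cadj G = - G" and G: "G = cadj M ** Z + Z ** M"
  shows "complex_of_real (inner Z G) = - trace (Z ** (M + cadj M) ** Z)"
proof -
  have i: "inner Z G = Re (- trace (Z ** G))"
    by (simp add: frob_inner_inner[symmetric] frob_inner_def Z mm_simps trace_neg)
  have "cnj (trace (Z ** G)) = trace (Z ** G)"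
    by (simp add: trace_cadj[symmetric] mm_simps Z GG trace_neg) (rule trace_mul_sym)
  hence r: "complex_of_real (Re (- trace (Z ** G))) = - trace (Z ** G)"
    by (intro real_of_cnj) simp
  have c: "trace (Z ** Z ** M) = trace (Z ** M ** Z)" using trace_cyc3[of Z M Z] by simp
  show ?thesis unfolding i r
    by (simp add: G mm_simps trace_add matrix_mul_assoc c)
qed

lemma tr_d:
  fixes Z G M :: "'n::finite cmat"
  assumes Z: "cadj Z = - Z" and GG: "cadj G = - G" and G: "G = cadj M ** Z + Z ** M"
  shows "complex_of_real (inner (cadj M ** Z ** M) G) = - trace (cadj M ** Z ** (M + cadj M) ** Z ** M)"
proof -
  define W where "W = cadj M ** Z ** M"
  have WW: "cadj W = - W" by (simp add: W_def mm_simps Z matrix_mul_assoc)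
  have i: "inner W G = Re (- trace (W ** G))"
    by (simp add: frob_inner_inner[symmetric] frob_inner_def WW mm_simps trace_neg)
  have "cnj (trace (W ** G)) = trace (W ** G)"
    by (simp add: trace_cadj[symmetric] mm_simps WW GG trace_neg) (rule trace_mul_sym)
  hence r: "complex_of_real (Re (- trace (W ** G))) = - trace (W ** G)"
    by (intro real_of_cnj) simp
  have c1: "trace (cadj M ** (Z ** M ** cadj M ** Z)) = trace ((Z ** M ** cadj M ** Z) ** cadj M)"
    by (rule trace_mul_sym)
  have c2: "trace (cadj M ** Z ** M ** cadj M ** Z) = trace (Z ** (cadj M ** Z ** M ** cadj M))"
    by (rule trace_mul_sym)
  have c3: "trace (cadj M ** (Z ** cadj M ** Z ** M)) = trace ((Z ** cadj M ** Z ** M) ** cadj M)"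
    by (rule trace_mul_sym)
  have e: "trace (cadj M ** Z ** M ** cadj M ** Z) = trace (cadj M ** Z ** cadj M ** Z ** M)"
    using c2 c3 by (simp add: matrix_mul_assoc)
  show ?thesis unfolding W_def[symmetric] i r
    by (simp add: W_def G mm_simps trace_add matrix_mul_assoc e)
qed



lemma nsq: "(norm (x + c *\<^sub>R y))^2 = (norm x)^2 + 2 * c * inner x y + c^2 * inner y (y::'a::real_inner)"
  unfolding power2_norm_eq_inner
  by (simp add: inner_add_left inner_add_right inner_commute power2_eq_square algebra_simps)

lemma rk_norm:
  fixes z0 :: "'a::real_inner" and G E Z :: "nat \<Rightarrow> 'a" and b :: "nat \<Rightarrow> real"
  assumes "\<And>i. i \<in> {1..s} \<Longrightarrow> Z i = z0 + h *\<^sub>R (\<Sum>j=1..<i. b j *\<^sub>R G j) + (h/2 * b i) *\<^sub>R G i - E i"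
  shows "(norm (z0 + h *\<^sub>R (\<Sum>i=1..s. b i *\<^sub>R G i)))^2
     = (norm z0)^2 + 2*h*(\<Sum>i=1..s. b i * inner (Z i + E i) (G i))"
  using assms
proof (induction s)
  case 0
  then show ?case by simp
next
  case (Suc s)
  define S where "S = z0 + h *\<^sub>R (\<Sum>i=1..s. b i *\<^sub>R G i)"
  define T where "T = (\<Sum>i=1..s. b i * inner (Z i + E i) (G i))"
  define a where "a = inner S (G (Suc s))"
  define q where "q = inner (G (Suc s)) (G (Suc s))"
  define bs where "bs = b (Suc s)"
  have IH: "(norm S)^2 = (norm z0)^2 + 2*h*T"
    using Suc by (simp add: S_def T_def)
  have ZE: "Z (Suc s) + E (Suc s) = S + (h/2 * b (Suc s)) *\<^sub>R G (Suc s)"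
    using Suc.prems[of "Suc s"] by (simp add: atLeastLessThanSuc_atLeastAtMost S_def)
  have S1: "z0 + h *\<^sub>R (\<Sum>i=1..Suc s. b i *\<^sub>R G i) = S + (h * b (Suc s)) *\<^sub>R G (Suc s)"
    by (simp add: scaleR_add_right algebra_simps S_def)
  have n: "(norm (S + (h * b (Suc s)) *\<^sub>R G (Suc s)))^2
       = (norm S)^2 + 2 * (h * bs) * a + (h * bs)^2 * q"
    unfolding a_def q_def bs_def by (rule nsq)
  have x: "inner (Z (Suc s) + E (Suc s)) (G (Suc s)) = a + (h/2 * bs) * q"
    unfolding ZE a_def q_def bs_def by (simp add: inner_add_left)
  have sm: "(\<Sum>i=1..Suc s. b i * inner (Z i + E i) (G i)) = T + bs * inner (Z (Suc s) + E (Suc s)) (G (Suc s))"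
    by (simp add: T_def bs_def)
  show ?case unfolding S1 n sm x IH
    by (simp add: power2_eq_square algebra_simps)
qed



theorem proposition4p4:
  fixes g :: "'n::finite cmat \<Rightarrow> 'n cmat"
    and b :: "nat \<Rightarrow> real" and h :: real and s :: nat
    and z0 z1 :: "'n cmat" and Z :: "nat \<Rightarrow> 'n cmat"
  assumes g_field: "\<And>z. skew_hermitian z \<Longrightarrow> skew_hermitian (g z)"
    and h_pos: "h > 0"
    and z0_sk: "skew_hermitian z0" and z1_sk: "skew_hermitian z1"
    and Z_sk: "\<And>i. i \<in> {1..s} \<Longrightarrow> skew_hermitian (Z i)"
    and Z_eig: "\<And>i. i \<in> {1..s} \<Longrightarrow> distinct_nonzero_eigs (Z i)"
    and stage: "\<And>i. i \<in> {1..s} \<Longrightarrow>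
       Z i = z0 + h *\<^sub>R (\<Sum>j=1..<i. b j *\<^sub>R g (Z j))
               + (h / 2 * b i) *\<^sub>R g (Z i)
               - (h^2 / 4 * (b i)^2) *\<^sub>R (cadj (Mpart g (Z i)) ** Z i ** Mpart g (Z i))"
    and update: "z1 = z0 + h *\<^sub>R (\<Sum>i=1..s. b i *\<^sub>R g (Z i))"
  shows "complex_of_real ((1/2) * (frob_norm z1)^2) =
           complex_of_real ((1/2) * (frob_norm z0)^2)
           - complex_of_real h * (\<Sum>i=1..s. complex_of_real (b i) *
                 trace (Z i ** Ppart g (Z i) ** Z i))
           - complex_of_real (h^3 / 4) * (\<Sum>i=1..s. complex_of_real ((b i)^3) *
                 trace (cadj (Mpart g (Z i)) ** Z i ** Ppart g (Z i) ** Z i ** Mpart g (Z i)))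
         \<and> ((\<forall>i\<in>{1..s}. g (Z i) = comm (cadj (Mpart g (Z i))) (Z i))
              \<longrightarrow> frob_norm z1 = frob_norm z0)"
proof -
  define G where "G i = g (Z i)" for i
  define M where "M i = Mpart g (Z i)" for i
  define P where "P i = Ppart g (Z i)" for i
  define W where "W i = cadj (M i) ** Z i ** M i" for i
  define E where "E i = (h^2 / 4 * (b i)^2) *\<^sub>R W i" for i
  have ne: "\<not> is_eigenvalue (Z i) 0" if "i \<in> {1..s}" for i
    using Z_eig[OF that] by (simp add: distinct_nonzero_eigs_def)
  have ZZ: "cadj (Z i) = - Z i" if "i \<in> {1..s}" for i
    using Z_sk[OF that] by (simp add: skew_hermitian_def)
  have GG: "cadj (G i) = - G i" if "i \<in> {1..s}" for i
    using g_field[OF Z_sk[OF that]] by (simp add: skew_hermitian_def G_def)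
  have MP1: "g (Z i) = cadj (Mpart g (Z i)) ** Z i + Z i ** Mpart g (Z i)"
    and MP2: "Mpart g (Z i) + cadj (Mpart g (Z i)) = Ppart g (Z i)" if i: "i \<in> {1..s}" for i
    using M_props[of "Z i" g, OF Z_sk[OF i] ne[OF i] g_field[OF Z_sk[OF i]]] by auto
  have GM: "G i = cadj (M i) ** Z i + Z i ** M i" if "i \<in> {1..s}" for i
    using MP1[OF that] by (simp add: G_def M_def)
  have PM: "P i = M i + cadj (M i)" if "i \<in> {1..s}" for i
    using MP2[OF that] by (simp add: P_def M_def)
  have c1: "complex_of_real (inner (Z i) (G i)) = - trace (Z i ** P i ** Z i)" if "i \<in> {1..s}" for i
    using tr_c[OF ZZ[OF that] GG[OF that] GM[OF that]] PM[OF that] by simp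
  have c2: "complex_of_real (inner (W i) (G i)) = - trace (cadj (M i) ** Z i ** P i ** Z i ** M i)"
    if "i \<in> {1..s}" for i
    using tr_d[OF ZZ[OF that] GG[OF that] GM[OF that]] PM[OF that] by (simp add: W_def)
  have st: "Z i = z0 + h *\<^sub>R (\<Sum>j=1..<i. b j *\<^sub>R G j) + (h/2 * b i) *\<^sub>R G i - E i"
    if "i \<in> {1..s}" for i
    using stage[OF that] by (simp add: G_def E_def W_def M_def)
  have N: "(norm z1)^2 = (norm z0)^2 + 2*h*(\<Sum>i=1..s. b i * inner (Z i + E i) (G i))"
    unfolding update G_def[symmetric] using rk_norm[of s Z z0 h b G E, OF st] by simp
  have sp: "(\<Sum>i=1..s. b i * inner (Z i + E i) (G i))
      = (\<Sum>i=1..s. b i * inner (Z i) (G i)) + h^2/4 * (\<Sum>i=1..s. (b i)^3 * inner (W i) (G i))"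
    by (simp add: E_def inner_add_left sum.distrib sum_distrib_left power2_eq_square power3_eq_cube algebra_simps)
  have R: "(1/2) * (norm z1)^2 = (1/2) * (norm z0)^2 + h * (\<Sum>i=1..s. b i * inner (Z i) (G i))
        + h^3/4 * (\<Sum>i=1..s. (b i)^3 * inner (W i) (G i))"
    unfolding N sp by (simp add: algebra_simps power3_eq_cube power2_eq_square)
  have s1: "complex_of_real (\<Sum>i=1..s. b i * inner (Z i) (G i))
      = - (\<Sum>i=1..s. complex_of_real (b i) * trace (Z i ** P i ** Z i))"
    unfolding of_real_sum sum_negf[symmetric] by (rule sum.cong) (auto simp: c1)
  have s2: "complex_of_real (\<Sum>i=1..s. (b i)^3 * inner (W i) (G i))
      = - (\<Sum>i=1..s. complex_of_real ((b i)^3) * trace (cadj (M i) ** Z i ** P i ** Z i ** M i))"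
    unfolding of_real_sum sum_negf[symmetric] by (rule sum.cong) (auto simp: c2)
  have first: "complex_of_real ((1/2) * (norm z1)^2) =
           complex_of_real ((1/2) * (norm z0)^2)
           - complex_of_real h * (\<Sum>i=1..s. complex_of_real (b i) * trace (Z i ** P i ** Z i))
           - complex_of_real (h^3 / 4) * (\<Sum>i=1..s. complex_of_real ((b i)^3) *
                 trace (cadj (M i) ** Z i ** P i ** Z i ** M i))"
    unfolding R using s1 s2 by (simp only: of_real_add of_real_mult) simp
  have second: "frob_norm z1 = frob_norm z0"
    if H: "\<forall>i\<in>{1..s}. g (Z i) = comm (cadj (Mpart g (Z i))) (Z i)"
  proof -
    have P0: "P i = 0" if i: "i \<in> {1..s}" for i
    proof -
      have "cadj (M i) ** Z i + Z i ** M i = cadj (M i) ** Z i - Z i ** cadj (M i)"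
        using GM[OF i] H i by (simp add: G_def M_def comm_def)
      hence "Z i ** (M i + cadj (M i)) = 0" by (simp add: mm_simps algebra_simps)
      hence ZP: "Z i ** P i = 0" using PM[OF i] by simp
      obtain Zi where "Zi ** Z i = mat 1" using inv_Z[OF ne[OF i]] by blast
      hence "P i = Zi ** (Z i ** P i)" by (simp add: matrix_mul_assoc)
      thus ?thesis using ZP by simp
    qed
    have "complex_of_real ((1/2) * (norm z1)^2) = complex_of_real ((1/2) * (norm z0)^2)"
      using first P0 by (simp add: trace_def)
    hence "(norm z1)^2 = (norm z0)^2" by (simp only: of_real_eq_iff)
    thus ?thesis by (simp add: frob_norm_norm power2_eq_iff_nonneg)
  qed
  show ?thesis using first second unfolding frob_norm_norm P_def M_def by blast
qed

end
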